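(* In the standard LLP setup, fix $N\ge1$. If the optimistic LLP supervisor is valid, i.e. $L(G,\gamma^N_{optm})=\overline{K^\uparrow}$, then there is no run-time error in $L(G,\gamma^N_{optm})$, i.e. there is no $s\in L(G,\gamma^N_{optm})$ with $f^N_{optm}(s)=\emptyset$.
   Context: Standard LLP setup. $\Sigma=\Sigma_c\,\dot\cup\,\Sigma_{uc}$ is a finite alphabet partitioned into controllable and uncontrollable events. The plant $G$ has generated language $L(G)$ and marked language $L_m(G)$ with $L(G)=\overline{L_m(G)}$ ($\overline{M}$ = set of prefixes of strings in $M$). The legal language $K\subseteq L_m(G)$ satisfies $K=\overline{K}\cap L_m(G)$. For a prefix-closed $L$, $M$ is controllable w.r.t. $L$ if $\overline{M}\Sigma_{uc}\cap L\subseteq\overline{M}$; $K^\uparrow$ is the supremal sublanguage of $K$ controllable w.r.t. $L(G)$. For a language $L$ and $s\in\Sigma^*$: $L/s=\{t: st\in L\}$; $L|_N=\{t\in L:|t|\le N\}$; $\Sigma_{L(G)}(s)=\{\sigma\in\Sigma: s\sigma\in L(G)\}$. $M^{\uparrow/s|_N}$ is the supremal sublanguage of $M$ controllable w.r.t. $L(G)/s|_N$. Optimistic attitude: $f^N_{optm}(s)=[K/s|_N\cup(\overline{K}/s|_N\setminus\overline{K}/s|_{N-1})]^{\uparrow/s|_N}$; control policy $\gamma^N_{optm}(s)=(\overline{f^N_{optm}(s)}\cap\Sigma)\cup(\Sigma_{uc}\cap\Sigma_{L(G)}(s))$. Closed-loop language $L(G,\gamma)$: $\epsilon\in L(G,\gamma)$,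 and $s\sigma\in L(G,\gamma)$ iff $s\in L(G,\gamma)$, $s\sigma\in L(G)$, $\sigma\in\gamma(s)$. A supervisor with policy $\gamma^N$ is valid if $L(G,\gamma^N)=\overline{K^\uparrow}$. A run-time error occurs at $s$ if $s\in L(G,\gamma^N)$ and $f^N(s)=\emptyset$. *)

theory Defs
  imports Main
begin

definition pref :: "'a list set \<Rightarrow> 'a list set" where
  "pref M = {s. \<exists>t. s @ t \<in> M}"

definition quot :: "'a list set \<Rightarrow> 'a list \<Rightarrow> 'a list set" where
  "quot L s = {t. s @ t \<in> L}"

definition trunc :: "'a list set \<Rightarrow> nat \<Rightarrow> 'a list set" where
  "trunc L N = {t \<in> L. length t \<le> N}"

definition controllable :: "'a list set \<Rightarrow> 'a list set \<Rightarrow> 'a set \<Rightarrow> bool" where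
  "controllable M L Sigma_uc \<longleftrightarrow>
     {s @ [\<sigma>] | s \<sigma>. s \<in> pref M \<and> \<sigma> \<in> Sigma_uc} \<inter> L \<subseteq> pref M"

definition supC :: "'a list set \<Rightarrow> 'a list set \<Rightarrow> 'a set \<Rightarrow> 'a list set" where
  "supC M L Sigma_uc = \<Union>{M'. M' \<subseteq> M \<and> controllable M' L Sigma_uc}"

definition enabled :: "'a set \<Rightarrow> 'a list set \<Rightarrow> 'a list \<Rightarrow> 'a set" where
  "enabled \<Sigma> L s = {\<sigma> \<in> \<Sigma>. s @ [\<sigma>] \<in> L}"

definition f_optm :: "'a set \<Rightarrow> 'a list set \<Rightarrow> 'a list set \<Rightarrow> nat \<Rightarrow> 'a list \<Rightarrow> 'a list set" where
  "f_optm Sigma_uc LG K N s =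
     supC (trunc (quot K s) N \<union>
           (trunc (quot (pref K) s) N - trunc (quot (pref K) s) (N - 1)))
          (trunc (quot LG s) N) Sigma_uc"

(* control policy gamma^N_optm(s); "pref(f(s)) \<inter> \<Sigma>" = events whose length-one string is in pref(f(s)) *)
definition gamma_optm :: "'a set \<Rightarrow> 'a set \<Rightarrow> 'a list set \<Rightarrow> 'a list set \<Rightarrow> nat \<Rightarrow> 'a list \<Rightarrow> 'a set" where
  "gamma_optm \<Sigma> Sigma_uc LG K N s =
     {\<sigma> \<in> \<Sigma>. [\<sigma>] \<in> pref (f_optm Sigma_uc LG K N s)} \<union> (Sigma_uc \<inter> enabled \<Sigma> LG s)"

inductive_set closed_loop :: "'a list set \<Rightarrow> ('a list \<Rightarrow> 'a set) \<Rightarrow> 'a list set"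
  for LG :: "'a list set" and \<gamma> :: "'a list \<Rightarrow> 'a set" where
  eps: "[] \<in> closed_loop LG \<gamma>"
| step: "s \<in> closed_loop LG \<gamma> \<Longrightarrow> s @ [\<sigma>] \<in> LG \<Longrightarrow> \<sigma> \<in> \<gamma> s \<Longrightarrow> s @ [\<sigma>] \<in> closed_loop LG \<gamma>"

end

theory Submission
  imports Defs
begin

lemma supC_sub: "supC M L U \<subseteq> M"
  unfolding supC_def by auto

lemma supC_ge: "M' \<subseteq> M \<Longrightarrow> controllable M' L U \<Longrightarrow> M' \<subseteq> supC M L U"
  unfolding supC_def by auto

lemma supC_ctrl: "controllable (supC M L U) L U"
  unfolding controllable_def supC_def pref_def by blast

lemma pref_app: "s @ t \<in> pref M \<Longrightarrow> s \<in> pref M"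
  unfolding pref_def by auto

lemma key:
  assumes N: "N \<ge> 1" and sP: "s \<in> pref (supC K LG U)"
  shows "f_optm U LG K N s \<noteq> {}"
proof -
  define KU where "KU = supC K LG U"
  have KUK: "KU \<subseteq> K" unfolding KU_def by (rule supC_sub)
  have cKU: "controllable KU LG U" unfolding KU_def by (rule supC_ctrl)
  define M' where "M' = {t. s@t \<in> KU \<and> length t \<le> N} \<union> {t. s@t \<in> pref KU \<and> length t = N}"
  have prefM: "pref M' = {t. s@t \<in> pref KU \<and> length t \<le> N}"
  proof
    show "pref M' \<subseteq> {t. s@t \<in> pref KU \<and> length t \<le> N}"
    proof
      fix t assume "t \<in> pref M'"
      then obtain u where "t @ u \<in> M'" unfolding pref_def by auto
      then show "t \<in> {t. s@t \<in> pref KU \<and> length t \<le> N}"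
        unfolding M'_def pref_def by auto
    qed
  next
    show "{t. s@t \<in> pref KU \<and> length t \<le> N} \<subseteq> pref M'"
    proof
      fix t assume "t \<in> {t. s@t \<in> pref KU \<and> length t \<le> N}"
      then have h: "s@t \<in> pref KU" "length t \<le> N" by auto
      then obtain u where u: "s@t@u \<in> KU" unfolding pref_def by auto
      show "t \<in> pref M'"
      proof (cases "length (t@u) \<le> N")
        case True
        then have "t@u \<in> M'" using u unfolding M'_def by auto
        then show ?thesis unfolding pref_def by blast
      next
        case False
        define v where "v = take (N - length t) u"
        have "length (t@v) = N" using False h(2) unfolding v_def by auto
        moreover have "s@(t@v) \<in> pref KU"
        proof -
          have "(s@(t@v)) @ drop (N - length t) u = s@t@u"
            unfolding v_def by simp
          then show ?thesis using u unfolding pref_def mem_Collect_eq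
            by (intro exI[where x="drop (N - length t) u"]) simp
        qed
        ultimately have "t@v \<in> M'" unfolding M'_def by auto
        then show ?thesis unfolding pref_def by blast
      qed
    qed
  qed
  have ne: "M' \<noteq> {}"
  proof
    assume "M' = {}"
    then have "pref M' = {}" unfolding pref_def by auto
    moreover have "[] \<in> pref M'" using prefM sP unfolding KU_def by auto
    ultimately show False by auto
  qed
  have sub: "M' \<subseteq> trunc (quot K s) N \<union>
           (trunc (quot (pref K) s) N - trunc (quot (pref K) s) (N - 1))"
  proof
    fix t assume "t \<in> M'"
    moreover have "pref KU \<subseteq> pref K" using KUK unfolding pref_def by auto
    ultimately show "t \<in> trunc (quot K s) N \<union>
           (trunc (quot (pref K) s) N - trunc (quot (pref K) s) (N - 1))"
      unfolding M'_def trunc_def quot_def using KUK N by auto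
  qed
  have ctrl: "controllable M' (trunc (quot LG s) N) U"
    unfolding controllable_def
  proof
    fix x assume "x \<in> {t @ [\<sigma>] |t \<sigma>. t \<in> pref M' \<and> \<sigma> \<in> U} \<inter> trunc (quot LG s) N"
    then obtain t \<sigma> where x: "x = t@[\<sigma>]" "t \<in> pref M'" "\<sigma> \<in> U" "s@t@[\<sigma>] \<in> LG"
      "length (t@[\<sigma>]) \<le> N"
      unfolding trunc_def quot_def by auto
    have "s@t \<in> pref KU" using x(2) prefM by auto
    then have "(s@t)@[\<sigma>] \<in> pref KU" using cKU x(3,4) unfolding controllable_def by auto
    then show "x \<in> pref M'" using prefM x by auto
  qed
  have "M' \<subseteq> f_optm U LG K N s"
    unfolding f_optm_def by (rule supC_ge[OF sub ctrl])
  then show ?thesis using ne by auto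
qed

theorem theorem3:
  fixes \<Sigma> Sigma_c Sigma_uc :: "'a set" and Lm LG K :: "'a list set" and N :: nat
  assumes "finite \<Sigma>" and "Sigma_c \<union> Sigma_uc = \<Sigma>" and "Sigma_c \<inter> Sigma_uc = {}"
    and "Lm \<subseteq> lists \<Sigma>" and "LG = pref Lm"
    and "K \<subseteq> Lm" and "K = pref K \<inter> Lm"
    and "N \<ge> 1"
    and "closed_loop LG (gamma_optm \<Sigma> Sigma_uc LG K N) = pref (supC K LG Sigma_uc)"
  shows "\<not> (\<exists>s \<in> closed_loop LG (gamma_optm \<Sigma> Sigma_uc LG K N). f_optm Sigma_uc LG K N s = {})"
  using key[OF assms(8)] assms(9) by auto

end
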